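(* Setting as in the context. If $M$ and $N$ are $(A,B)$-adjacent, then there is no violation of $(M,N)$.
   Context: Let $K$ be a field and $\mathcal{Q}$ a bipartite quiver (every arrow goes from a source vertex to a sink vertex) with arrows $h_1,\dots,h_r$ and a nonnegative integer $m_\gamma$ attached to each vertex $\gamma$. For each $k$ let $X^{(k)}=[x^{(k)}_{ij}]$ be an $m_{{\rm t}(h_k)}\times m_{{\rm s}(h_k)}$ matrix of distinct independent variables (all variables distinct), in $K[X]$. For a sink $\alpha$, $A_\alpha$ is the horizontal concatenation $[X^{(r_1)}|\cdots|X^{(r_s)}]$ over the arrows $h_{r_1},\dots,h_{r_s}$ ($r_1<\dots<r_s$) with target $\alpha$; for a source $\beta$, $A_\beta$ is the vertical stacking of $X^{(r'_1)},\dots,X^{(r'_t)}$ over the arrows with source $\beta$ ($r'_1<\dots<r'_t$). Fix a lexicographic monomial order $>$ consistent with every $A_\gamma$ (in each $A_\gamma$ the variables strictly decrease from left to right along rows and from top to bottom along columns). Fix an arrow from a source $\gamma_2$ to a sink $\gamma_1$, let $A=A_{\gamma_1}$, $B=A_{\gamma_2}$, let $u,v$ be positive integers, and let $D_u(A)$, $D_v(B)$ be the sets of $u\times u$ minors of $A$ and $v\times v$ minors of $B$. Let $M\in D_u(A)$, $N\in D_v(B)$, $L=\mathrm{lcm}(\mathrm{LM}(M),\mathrm{LM}(N))=x_{p_1}\cdots x_{p_l}$ with $x_{p_1}>\dots>x_{p_l}$, where $p_i=(\alpha_i,\beta_i,r_i)$ means $x_{p_i}=x^{(r_i)}_{\alpha_i\beta_i}$;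 let $S_M=\{i:x_{p_i}\mid\mathrm{LM}(M)\}$, $S_N=\{i:x_{p_i}\mid\mathrm{LM}(N)\}$. A violation of $(M,N)$ is a triple $(p_i,p_j,p_k)$ of distinct indices $i\in S_M$, $j\in S_N$, $k\in S_M\cap S_N$ with $r_i=r_j=r_k$, $\alpha_i\le\alpha_j<\alpha_k$, $\beta_j\le\beta_i<\beta_k$ and $(\alpha_i,\beta_i)\ne(\alpha_j,\beta_j)$. For a minor $P$ let $V_P$ be the set of variables dividing $\mathrm{LM}(P)$ and $d(P,Q)=|(V_P\setminus V_Q)\cup(V_Q\setminus V_P)|$. Let $D^L_u(A)=\{P\in D_u(A):\mathrm{LM}(P)\mid L\}$ and $D^L_v(B)=\{Q\in D_v(B):\mathrm{LM}(Q)\mid L\}$. $M$ and $N$ are $(A,B)$-adjacent if $M\ne N$, there is no $P\in D^L_u(A)$ with $d(P,N)<d(M,N)$, and there is no $Q\in D^L_v(B)$ with $d(M,Q)<d(M,N)$. *)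

theory Defs
  imports "Jordan_Normal_Form.Determinant" "Jordan_Normal_Form.DL_Submatrix"
    "HOL-Library.Poly_Mapping"
begin

(* A variable x^{(r)}_{alpha beta} is encoded by the triple (alpha, beta, r)
   (all indices 0-based). *)
type_synonym var = "nat \<times> nat \<times> nat"
type_synonym mon = "var \<Rightarrow>\<^sub>0 nat"
type_synonym 'a mpoly = "mon \<Rightarrow>\<^sub>0 'a"

definition Var :: "var \<Rightarrow> 'a::comm_ring_1 mpoly" where
  "Var x = Poly_Mapping.single (Poly_Mapping.single x 1) 1"

(* Quiver: arrows 0..<nr, source s k, target t k; dimension vector m. *)
definition bipartite_quiver :: "nat \<Rightarrow> (nat \<Rightarrow> 'v) \<Rightarrow> (nat \<Rightarrow> 'v) \<Rightarrow> bool" where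
  "bipartite_quiver nr s t \<longleftrightarrow> (\<forall>k<nr. \<forall>k'<nr. s k \<noteq> t k')"

definition qvars :: "nat \<Rightarrow> (nat \<Rightarrow> 'v) \<Rightarrow> (nat \<Rightarrow> 'v) \<Rightarrow> ('v \<Rightarrow> nat) \<Rightarrow> var set" where
  "qvars nr s t m = {(i, j, k). k < nr \<and> i < m (t k) \<and> j < m (s k)}"

(* A_gamma for a sink gamma: horizontal concatenation of the X^{(k)} with t k = gamma,
   in increasing order of k *)
definition sink_mat :: "nat \<Rightarrow> (nat \<Rightarrow> 'v) \<Rightarrow> (nat \<Rightarrow> 'v) \<Rightarrow> ('v \<Rightarrow> nat) \<Rightarrow> 'v \<Rightarrow> var mat" where
  "sink_mat nr s t m \<gamma> =
    (let cols = concat (map (\<lambda>k. map (\<lambda>j. (j, k)) [0..<m (s k)]) (filter (\<lambda>k. t k = \<gamma>) [0..<nr]))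
     in mat (m \<gamma>) (length cols) (\<lambda>(i, c). (i, fst (cols ! c), snd (cols ! c))))"

(* A_gamma for a source gamma: vertical stacking of the X^{(k)} with s k = gamma,
   in increasing order of k *)
definition source_mat :: "nat \<Rightarrow> (nat \<Rightarrow> 'v) \<Rightarrow> (nat \<Rightarrow> 'v) \<Rightarrow> ('v \<Rightarrow> nat) \<Rightarrow> 'v \<Rightarrow> var mat" where
  "source_mat nr s t m \<gamma> =
    (let rows = concat (map (\<lambda>k. map (\<lambda>i. (i, k)) [0..<m (t k)]) (filter (\<lambda>k. s k = \<gamma>) [0..<nr]))
     in mat (length rows) (m \<gamma>) (\<lambda>(r, j). (fst (rows ! r), j, snd (rows ! r))))"

(* (x, y) \<in> ord  means  x > y.  The order is consistent with a matrix of variables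
   if variables strictly decrease left-to-right in rows and top-to-bottom in columns *)
definition consistent :: "(var \<times> var) set \<Rightarrow> var mat \<Rightarrow> bool" where
  "consistent ord A \<longleftrightarrow>
     (\<forall>i<dim_row A. \<forall>j<dim_col A. \<forall>j'<dim_col A. j < j' \<longrightarrow> (A $$ (i, j), A $$ (i, j')) \<in> ord) \<and>
     (\<forall>i<dim_row A. \<forall>i'<dim_row A. \<forall>j<dim_col A. i < i' \<longrightarrow> (A $$ (i, j), A $$ (i', j)) \<in> ord)"

definition lex_gt :: "(var \<times> var) set \<Rightarrow> mon \<Rightarrow> mon \<Rightarrow> bool" where
  "lex_gt ord a b \<longleftrightarrow>
     (\<exists>x. Poly_Mapping.lookup b x < Poly_Mapping.lookup a x \<and> (\<forall>y. (y, x) \<in> ord \<longrightarrow> Poly_Mapping.lookup a y = Poly_Mapping.lookup b y))"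

definition LM :: "(var \<times> var) set \<Rightarrow> 'a::zero mpoly \<Rightarrow> mon" where
  "LM ord p = (THE a. a \<in> Poly_Mapping.keys p \<and> (\<forall>b\<in>Poly_Mapping.keys p. b \<noteq> a \<longrightarrow> lex_gt ord a b))"

definition mon_dvd :: "mon \<Rightarrow> mon \<Rightarrow> bool" where
  "mon_dvd a b \<longleftrightarrow> (\<forall>x. Poly_Mapping.lookup a x \<le> Poly_Mapping.lookup b x)"

definition mon_lcm :: "mon \<Rightarrow> mon \<Rightarrow> mon" where
  "mon_lcm a b = Abs_poly_mapping (\<lambda>x. max (Poly_Mapping.lookup a x) (Poly_Mapping.lookup b x))"

definition minors :: "nat \<Rightarrow> var mat \<Rightarrow> 'a::comm_ring_1 mpoly set" where
  "minors u A = {det (submatrix (map_mat Var A) R C) | R C.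
      R \<subseteq> {..<dim_row A} \<and> C \<subseteq> {..<dim_col A} \<and> card R = u \<and> card C = u}"

definition Vset :: "(var \<times> var) set \<Rightarrow> 'a::zero mpoly \<Rightarrow> var set" where
  "Vset ord P = Poly_Mapping.keys (LM ord P)"

definition dist_LM :: "(var \<times> var) set \<Rightarrow> 'a::zero mpoly \<Rightarrow> 'a mpoly \<Rightarrow> nat" where
  "dist_LM ord P Q = card ((Vset ord P - Vset ord Q) \<union> (Vset ord Q - Vset ord P))"

definition minors_L :: "(var \<times> var) set \<Rightarrow> mon \<Rightarrow> nat \<Rightarrow> var mat \<Rightarrow> 'a::comm_ring_1 mpoly set" where
  "minors_L ord L u A = {P \<in> minors u A. mon_dvd (LM ord P) L}"

definition adjacent :: "(var \<times> var) set \<Rightarrow> nat \<Rightarrow> var mat \<Rightarrow> nat \<Rightarrow> var mat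
    \<Rightarrow> 'a::comm_ring_1 mpoly \<Rightarrow> 'a mpoly \<Rightarrow> bool" where
  "adjacent ord u A v B M N \<longleftrightarrow>
     (let L = mon_lcm (LM ord M) (LM ord N) in
       M \<noteq> N \<and>
       \<not> (\<exists>P \<in> minors_L ord L u A. dist_LM ord P N < dist_LM ord M N) \<and>
       \<not> (\<exists>Q \<in> minors_L ord L v B. dist_LM ord M Q < dist_LM ord M N))"

(* violation: variables p_i, p_j, p_k (distinct indices of L = distinct variables of L)
   with p_i | LM(M), p_j | LM(N), p_k | LM(M) and LM(N) *)
definition violation :: "(var \<times> var) set \<Rightarrow> 'a::zero mpoly \<Rightarrow> 'a mpoly \<Rightarrow> var \<Rightarrow> var \<Rightarrow> var \<Rightarrow> bool" where
  "violation ord M N p1 p2 p3 \<longleftrightarrow>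
     (case (p1, p2, p3) of ((ai, bi, ri), (aj, bj, rj), (ak, bk, rk)) \<Rightarrow>
       p1 \<in> Vset ord M \<and> p2 \<in> Vset ord N \<and> p3 \<in> Vset ord M \<inter> Vset ord N \<and>
       p1 \<noteq> p2 \<and> p1 \<noteq> p3 \<and> p2 \<noteq> p3 \<and>
       ri = rj \<and> rj = rk \<and> ai \<le> aj \<and> aj < ak \<and> bj \<le> bi \<and> bi < bk \<and> (ai, bi) \<noteq> (aj, bj))"

end

theory Submission
  imports Defs
begin

definition ind :: "(nat \<Rightarrow> var) \<Rightarrow> nat \<Rightarrow> mon" where
  "ind f n = (\<Sum>i<n. Poly_Mapping.single (f i) 1)"

lemma lookup_ind:
  assumes "inj_on f {..<n}"
  shows "Poly_Mapping.lookup (ind f n) x = (if x \<in> f ` {..<n} then 1 else 0)"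
proof -
  have "Poly_Mapping.lookup (ind f n) x = (\<Sum>i<n. if f i = x then 1 else 0)"
    unfolding ind_def lookup_sum by (rule sum.cong) (auto simp: lookup_single when_def)
  also have "\<dots> = (if x \<in> f ` {..<n} then 1 else 0)"
  proof (cases "x \<in> f ` {..<n}")
    case True
    then obtain i0 where i0: "i0 < n" "x = f i0" by auto
    have "(\<Sum>i<n. if f i = x then 1 else (0::nat)) = (\<Sum>i<n. if i = i0 then 1 else 0)"
      apply (rule sum.cong, simp)
      using assms i0 by (auto simp: inj_on_def)
    also have "\<dots> = 1" using i0 by simp
    finally show ?thesis using True by simp
  next
    case False
    then show ?thesis by (auto intro!: sum.neutral)
  qed
  finally show ?thesis .
qed

lemma keys_ind:
  assumes "inj_on f {..<n}"
  shows "Poly_Mapping.keys (ind f n) = f ` {..<n}"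
proof -
  have "x \<in> Poly_Mapping.keys (ind f n) \<longleftrightarrow> x \<in> f ` {..<n}" for x
    using lookup_ind[OF assms, of x] by (simp add: in_keys_iff)
  then show ?thesis by blast
qed

lemma prod_Var:
  "(\<Prod>i = 0..<n. (Var (g i) :: 'a::comm_ring_1 mpoly)) = Poly_Mapping.single (ind g n) 1"
proof (induction n)
  case 0
  then show ?case by (simp add: ind_def)
next
  case (Suc n)
  then show ?case
    by (simp add: prod.atLeast0_lessThan_Suc ind_def Var_def mult_single)
qed

lemma signof_single:
  "(signof p :: 'a::comm_ring_1 mpoly) * Poly_Mapping.single k 1 = Poly_Mapping.single k (signof p)"
  by (metis (no_types, opaque_lifting) mult.commute mult_1 mult_single single_of_int single_one)

lemma lex_gt_asym:
  assumes slo: "strict_linear_order_on Q ord"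
    and a: "Poly_Mapping.keys a \<subseteq> Q" and b: "Poly_Mapping.keys b \<subseteq> Q"
    and g1: "lex_gt ord a b" and g2: "lex_gt ord b a"
  shows False
proof -
  obtain x where x: "Poly_Mapping.lookup b x < Poly_Mapping.lookup a x"
    "\<forall>y. (y, x) \<in> ord \<longrightarrow> Poly_Mapping.lookup a y = Poly_Mapping.lookup b y"
    using g1 unfolding lex_gt_def by blast
  obtain x' where x': "Poly_Mapping.lookup a x' < Poly_Mapping.lookup b x'"
    "\<forall>y. (y, x') \<in> ord \<longrightarrow> Poly_Mapping.lookup b y = Poly_Mapping.lookup a y"
    using g2 unfolding lex_gt_def by blast
  have xQ: "x \<in> Q" using x(1) a by (auto simp: in_keys_iff)
  have x'Q: "x' \<in> Q" using x'(1) b by (auto simp: in_keys_iff)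
  have "x \<noteq> x'" using x(1) x'(1) by auto
  then have "(x, x') \<in> ord \<or> (x', x) \<in> ord"
    using slo xQ x'Q unfolding strict_linear_order_on_def total_on_def by blast
  then show False
  proof
    assume "(x, x') \<in> ord"
    then have "Poly_Mapping.lookup b x = Poly_Mapping.lookup a x" using x'(2) by blast
    then show False using x(1) by simp
  next
    assume "(x', x) \<in> ord"
    then have "Poly_Mapping.lookup a x' = Poly_Mapping.lookup b x'" using x(2) by blast
    then show False using x'(1) by simp
  qed
qed

lemma det_LM_core:
  fixes ord :: "(var \<times> var) set" and e :: "nat \<Rightarrow> nat \<Rightarrow> var" and n :: nat
  assumes slo: "strict_linear_order_on Q ord"
    and inQ: "\<forall>i<n. \<forall>j<n. e i j \<in> Q"
    and inj: "\<forall>i<n. \<forall>j<n. \<forall>i'<n. \<forall>j'<n. e i j = e i' j' \<longrightarrow> i = i' \<and> j = j'"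
    and row: "\<forall>i<n. \<forall>j<n. \<forall>j'<n. j < j' \<longrightarrow> (e i j, e i j') \<in> ord"
    and col: "\<forall>i<n. \<forall>i'<n. \<forall>j<n. i < i' \<longrightarrow> (e i j, e i' j) \<in> ord"
  shows "LM ord (det (mat n n (\<lambda>(i,j). Var (e i j))) :: 'a::field mpoly) = ind (\<lambda>i. e i i) n"
proof -
  define mono where "mono p = ind (\<lambda>i. e i (p i)) n" for p :: "nat \<Rightarrow> nat"
  define P where "P = {p. p permutes {0..<n}}"
  have finP: "finite P" unfolding P_def by (simp add: finite_permutations)
  have trans: "trans ord" and irr: "irrefl ord" using slo unfolding strict_linear_order_on_def by auto
  have irr': "(z, z) \<notin> ord" for z using irr unfolding irrefl_def by blast
  have tr': "(a, c) \<in> ord" if "(a, b) \<in> ord" "(b, c) \<in> ord" for a b c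
    using trans that unfolding trans_def by blast
  have pn: "p i < n" if "p \<in> P" "i < n" for p i
    using that permutes_in_image[of p "{0..<n}" i] unfolding P_def by auto
  have injp: "inj_on (\<lambda>i. e i (p i)) {..<n}" if "p \<in> P" for p
    unfolding inj_on_def
  proof (intro ballI impI)
    fix x y assume "x \<in> {..<n}" "y \<in> {..<n}" "e x (p x) = e y (p y)"
    then show "x = y" using inj[rule_format, of x "p x" y "p y"] pn[OF that] by auto
  qed
  have keys_mono: "Poly_Mapping.keys (mono p) = (\<lambda>i. e i (p i)) ` {..<n}" if "p \<in> P" for p
    unfolding mono_def by (rule keys_ind[OF injp[OF that]])
  have lookup_mono: "Poly_Mapping.lookup (mono p) x = (if x \<in> (\<lambda>i. e i (p i)) ` {..<n} then 1 else 0)"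
    if "p \<in> P" for p x
    unfolding mono_def by (rule lookup_ind[OF injp[OF that]])
  have idP: "id \<in> P" unfolding P_def by (simp add: permutes_id)
  have monoid: "mono id = ind (\<lambda>i. e i i) n" unfolding mono_def by simp
  have D1: "(det (mat n n (\<lambda>(i,j). Var (e i j))) :: 'a mpoly) = (\<Sum>p\<in>P. Poly_Mapping.single (mono p) (signof p))"
  proof -
    have "(det (mat n n (\<lambda>(i,j). Var (e i j))) :: 'a mpoly) =
      (\<Sum>p\<in>P. signof p * (\<Prod>i = 0..<n. mat n n (\<lambda>(i,j). Var (e i j)) $$ (i, p i)))"
      unfolding P_def by (rule det_def', simp)
    also have "\<dots> = (\<Sum>p\<in>P. signof p * (\<Prod>i = 0..<n. (Var (e i (p i)) :: 'a mpoly)))"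
      by (rule sum.cong, simp, rule arg_cong[where f="\<lambda>x. _ * x"], rule prod.cong, simp, simp add: pn)
    also have "\<dots> = (\<Sum>p\<in>P. Poly_Mapping.single (mono p) (signof p))"
      unfolding prod_Var signof_single mono_def by (rule refl)
    finally show ?thesis .
  qed
  have monoeq: "p = id" if "p \<in> P" "mono p = mono id" for p
  proof
    fix i
    show "p i = id i"
    proof (cases "i < n")
      case True
      have "Poly_Mapping.lookup (mono id) (e i i) = 1" using lookup_mono[OF idP] True by auto
      then have "Poly_Mapping.lookup (mono p) (e i i) = 1" using that by simp
      then have "e i i \<in> (\<lambda>i. e i (p i)) ` {..<n}" using lookup_mono[OF that(1)] by (auto split: if_splits)
      then obtain j where "j < n" "e i i = e j (p j)" by auto
      then show ?thesis using inj[rule_format, of i i j "p j"] True pn[OF that(1) \<open>j<n\<close>] by auto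
    next
      case False
      then show ?thesis using that(1) unfolding P_def permutes_def by auto
    qed
  qed
  have D2: "Poly_Mapping.lookup ((det (mat n n (\<lambda>(i,j). Var (e i j))) :: 'a mpoly)) (mono id) = 1"
  proof -
    have "Poly_Mapping.lookup ((det (mat n n (\<lambda>(i,j). Var (e i j))) :: 'a mpoly)) (mono id)
       = (\<Sum>p\<in>P. if p = id then signof p else 0)"
      unfolding D1 lookup_sum
      apply (rule sum.cong, simp)
      using monoeq by (auto simp: lookup_single when_def)
    also have "\<dots> = signof (id :: nat \<Rightarrow> nat)" using finP idP by (simp add: sum.delta')
    finally show ?thesis by (simp add: sign_id)
  qed
  let ?d = "(det (mat n n (\<lambda>(i,j). Var (e i j))) :: 'a mpoly)"
  have D3: "Poly_Mapping.keys ?d \<subseteq> mono ` P"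
  proof -
    have "Poly_Mapping.keys ?d \<subseteq> (\<Union>p\<in>P. Poly_Mapping.keys (Poly_Mapping.single (mono p) (signof p :: 'a)))"
      unfolding D1 by (rule keys_sum)
    moreover have "Poly_Mapping.keys (Poly_Mapping.single (mono p) (signof p :: 'a)) \<subseteq> {mono p}" for p
      by simp
    ultimately show ?thesis by blast
  qed
  have K: "(e i0 i0, e i j) \<in> ord" if "i0 \<le> i" "i0 \<le> j" "i < n" "j < n" "(i, j) \<noteq> (i0, i0)" for i0 i j
  proof (cases "i = i0")
    case True
    then show ?thesis using that row by auto
  next
    case False
    then have c1: "(e i0 i0, e i i0) \<in> ord" using that col by auto
    show ?thesis
    proof (cases "j = i0")
      case True then show ?thesis using c1 by simp
    next
      case False
      then have "(e i i0, e i j) \<in> ord" using that row by auto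
      then show ?thesis using c1 tr' by blast
    qed
  qed
  have D4: "lex_gt ord (mono id) (mono p)" if "p \<in> P" "p \<noteq> id" for p
  proof -
    have "\<exists>i<n. p i \<noteq> i"
    proof (rule ccontr)
      assume "\<not> (\<exists>i<n. p i \<noteq> i)"
      then have "p x = x" for x using that(1) unfolding P_def permutes_def by (cases "x < n") auto
      then have "p = id" by auto
      then show False using that(2) by simp
    qed
    define i0 where "i0 = (LEAST i. i < n \<and> p i \<noteq> i)"
    have i0: "i0 < n" "p i0 \<noteq> i0" unfolding i0_def using LeastI_ex[OF \<open>\<exists>i<n. p i \<noteq> i\<close>] by auto
    have fix0: "p j = j" if "j < i0" for j
      using not_less_Least[of j "\<lambda>i. i < n \<and> p i \<noteq> i"] that i0 unfolding i0_def[symmetric] by auto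
    have injp': "inj p" using that(1) unfolding P_def by (auto dest: permutes_inj)
    define x where "x = e i0 i0"
    have xnot: "x \<notin> (\<lambda>i. e i (p i)) ` {..<n}"
    proof
      assume "x \<in> (\<lambda>i. e i (p i)) ` {..<n}"
      then obtain j where "j < n" "e i0 i0 = e j (p j)" unfolding x_def by auto
      then show False using inj[rule_format, of i0 i0 j "p j"] i0 pn[OF that(1) \<open>j<n\<close>] by auto
    qed
    have xin: "x \<in> (\<lambda>i. e i (id i)) ` {..<n}" unfolding x_def using i0 by auto
    have notgt: "(y, x) \<notin> ord" if ny1: "y \<in> (\<lambda>i. e i (id i)) ` {..<n}" and ny2: "y \<notin> (\<lambda>i. e i (p i)) ` {..<n}" for y
    proof
      assume yx: "(y, x) \<in> ord"
      obtain i where i: "i < n" "y = e i i" using ny1 by auto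
      have "p i \<noteq> i" using ny2 i by force
      then have "i0 \<le> i" using fix0 by (meson not_le)
      moreover have "i \<noteq> i0" using yx i irr'[of "e i0 i0"] unfolding x_def by auto
      ultimately have "(x, y) \<in> ord" unfolding x_def using K[of i0 i i] i i0 by auto
      then show False using yx tr' irr' by blast
    qed
    have notgt2: "(y, x) \<notin> ord" if ny1: "y \<notin> (\<lambda>i. e i (id i)) ` {..<n}" and ny2: "y \<in> (\<lambda>i. e i (p i)) ` {..<n}" for y
    proof
      assume yx: "(y, x) \<in> ord"
      obtain j where j: "j < n" "y = e j (p j)" using ny2 by auto
      have pj: "p j \<noteq> j" using ny1 j by force
      then have "i0 \<le> j" using fix0 by (meson not_le)
      have "i0 \<le> p j"
      proof (rule ccontr)
        assume "\<not> i0 \<le> p j"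
        then have "p (p j) = p j" using fix0 by auto
        then have "p j = j" using injp' by (meson injD)
        then show False using pj by simp
      qed
      have "(j, p j) \<noteq> (i0, i0)" using pj by auto
      then have "(x, y) \<in> ord" unfolding x_def using K[of i0 j "p j"] j \<open>i0 \<le> j\<close> \<open>i0 \<le> p j\<close> pn[OF \<open>p \<in> P\<close> j(1)] by auto
      then show False using yx tr' irr' by blast
    qed
    show ?thesis unfolding lex_gt_def
    proof (intro exI conjI allI impI)
      show "Poly_Mapping.lookup (mono p) x < Poly_Mapping.lookup (mono id) x"
        using lookup_mono[OF that(1)] lookup_mono[OF idP] xnot xin by simp
      fix y assume yx: "(y, x) \<in> ord"
      have "y \<in> (\<lambda>i. e i (id i)) ` {..<n} \<longleftrightarrow> y \<in> (\<lambda>i. e i (p i)) ` {..<n}"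
        using notgt[of y] notgt2[of y] yx by blast
      then show "Poly_Mapping.lookup (mono id) y = Poly_Mapping.lookup (mono p) y"
        unfolding lookup_mono[OF that(1), of y] lookup_mono[OF idP, of y] by simp
    qed
  qed
  have keysQ: "Poly_Mapping.keys (mono p) \<subseteq> Q" if "p \<in> P" for p
    using keys_mono[OF that] inQ pn[OF that] by auto
  have prp: "mono id \<in> Poly_Mapping.keys ?d \<and> (\<forall>b\<in>Poly_Mapping.keys ?d. b \<noteq> mono id \<longrightarrow> lex_gt ord (mono id) b)"
  proof
    show "mono id \<in> Poly_Mapping.keys ?d" using D2 by (simp add: in_keys_iff)
    show "\<forall>b\<in>Poly_Mapping.keys ?d. b \<noteq> mono id \<longrightarrow> lex_gt ord (mono id) b"
    proof (intro ballI impI)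
      fix b assume "b \<in> Poly_Mapping.keys ?d" "b \<noteq> mono id"
      then obtain p where "p \<in> P" "b = mono p" using D3 by blast
      then show "lex_gt ord (mono id) b" using D4 \<open>b \<noteq> mono id\<close> by blast
    qed
  qed
  have "LM ord ?d = mono id"
    unfolding LM_def
  proof (rule the_equality)
    show "mono id \<in> Poly_Mapping.keys ?d \<and> (\<forall>b\<in>Poly_Mapping.keys ?d. b \<noteq> mono id \<longrightarrow> lex_gt ord (mono id) b)"
      by (rule prp)
    fix a assume a: "a \<in> Poly_Mapping.keys ?d \<and> (\<forall>b\<in>Poly_Mapping.keys ?d. b \<noteq> a \<longrightarrow> lex_gt ord a b)"
    show "a = mono id"
    proof (rule ccontr)
      assume ne: "a \<noteq> mono id"
      obtain p where p: "p \<in> P" "a = mono p" using a D3 by auto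
      have "lex_gt ord a (mono id)" using a prp ne by auto
      moreover have "lex_gt ord (mono id) a" using prp a ne by auto
      ultimately show False using lex_gt_asym[OF slo keysQ[OF p(1)] keysQ[OF idP]] p by simp
    qed
  qed
  then show ?thesis using monoid by simp
qed

definition aa :: "var \<Rightarrow> nat" where "aa x = fst x"
definition bb :: "var \<Rightarrow> nat" where "bb x = fst (snd x)"
definition rr :: "var \<Rightarrow> nat" where "rr x = snd (snd x)"

definition ltA :: "var \<Rightarrow> var \<Rightarrow> bool" where
  "ltA x y \<longleftrightarrow> aa x < aa y \<and> (rr x < rr y \<or> rr x = rr y \<and> bb x < bb y)"
definition ltB :: "var \<Rightarrow> var \<Rightarrow> bool" where
  "ltB x y \<longleftrightarrow> (rr x < rr y \<or> rr x = rr y \<and> aa x < aa y) \<and> bb x < bb y"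
definition chainR :: "(var \<Rightarrow> var \<Rightarrow> bool) \<Rightarrow> var set \<Rightarrow> bool" where
  "chainR R V \<longleftrightarrow> (\<forall>x\<in>V. \<forall>y\<in>V. x \<noteq> y \<longrightarrow> R x y \<or> R y x)"

lemma ltA_trans: "ltA x y \<Longrightarrow> ltA y z \<Longrightarrow> ltA x z" unfolding ltA_def by auto
lemma ltB_trans: "ltB x y \<Longrightarrow> ltB y z \<Longrightarrow> ltB x z" unfolding ltB_def by auto
lemma ltA_irr: "\<not> ltA x x" unfolding ltA_def by auto
lemma ltB_irr: "\<not> ltB x x" unfolding ltB_def by auto
lemma ltA_asym: "ltA x y \<Longrightarrow> \<not> ltA y x" unfolding ltA_def by auto
lemma ltB_asym: "ltB x y \<Longrightarrow> \<not> ltB y x" unfolding ltB_def by auto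
lemma ltAB_same: "rr x = rr y \<Longrightarrow> ltA x y \<longleftrightarrow> ltB x y" unfolding ltA_def ltB_def by auto

lemma chainD: "chainR R V \<Longrightarrow> x \<in> V \<Longrightarrow> y \<in> V \<Longrightarrow> x \<noteq> y \<Longrightarrow> R x y \<or> R y x"
  unfolding chainR_def by blast

lemma chain_subset: "chainR R V \<Longrightarrow> W \<subseteq> V \<Longrightarrow> chainR R W"
  unfolding chainR_def by blast

lemma card_less_pred:
  assumes "finite V" "m \<in> V" "\<And>c. R c m \<Longrightarrow> R c x" "R m x" "\<not> R m m"
  shows "card {c\<in>V. R c m} < card {c\<in>V. R c x}"
proof (rule psubset_card_mono)
  show "finite {c\<in>V. R c x}" using assms(1) by simp
  show "{c\<in>V. R c m} \<subset> {c\<in>V. R c x}" using assms by blast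
qed

lemma comb:
  assumes fM: "finite VM" and fN: "finite VN"
    and cM: "chainR ltA VM" and cN: "chainR ltB VN"
    and x0M: "x0 \<in> VM" and y0N: "y0 \<in> VN" and pkM: "pk \<in> VM" and pkN: "pk \<in> VN"
    and r0: "rr x0 = rr pk" "rr y0 = rr pk"
    and ineq0: "aa x0 \<le> aa y0" "aa y0 < aa pk" "bb y0 \<le> bb x0" "bb x0 < bb pk"
    and ne0: "x0 \<noteq> y0"
  shows "(\<exists>V'. V' \<subseteq> VM \<union> VN \<and> chainR ltA V' \<and> card V' = card VM \<and>
            card (VM \<inter> VN) < card (V' \<inter> VN) \<and> (\<forall>z\<in>V' - VM. rr z = rr pk))
       \<or> (\<exists>V'. V' \<subseteq> VM \<union> VN \<and> chainR ltB V' \<and> card V' = card VN \<and>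
            card (VM \<inter> VN) < card (V' \<inter> VM) \<and> (\<forall>z\<in>V' - VN. rr z = rr pk))"
proof -
  define Viol where "Viol = (\<lambda>(x, y). x \<in> VM \<and> y \<in> VN \<and> rr x = rr pk \<and> rr y = rr pk \<and>
      aa x \<le> aa y \<and> aa y < aa pk \<and> bb y \<le> bb x \<and> bb x < bb pk \<and> x \<noteq> y)"
  define mu where "mu = (\<lambda>(x, y). card {c\<in>VM. ltA c x} + card {c\<in>VN. ltB c y})"
  have "Viol (x0, y0)" unfolding Viol_def using assms by auto
  then obtain q where q: "Viol q" "\<forall>q'. Viol q' \<longrightarrow> mu q \<le> mu q'"
    using ex_has_least_nat[of Viol "(x0, y0)" mu] by blast
  obtain x y where xy: "q = (x, y)" by (cases q)
  have xM: "x \<in> VM" and yN: "y \<in> VN" and rx: "rr x = rr pk" and ry: "rr y = rr pk"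
    and i1: "aa x \<le> aa y" and i2: "aa y < aa pk" and i3: "bb y \<le> bb x" and i4: "bb x < bb pk"
    and xy_ne: "x \<noteq> y"
    using q(1) unfolding xy Viol_def by auto
  have minq: "mu (x, y) \<le> mu (x', y')" if "Viol (x', y')" for x' y'
    using q(2) that unfolding xy by blast
  have xnN: "x \<notin> VN"
  proof
    assume "x \<in> VN"
    then have "ltB x y \<or> ltB y x" using chainD[OF cN _ yN xy_ne] by blast
    then show False using i1 i3 rx ry unfolding ltB_def by auto
  qed
  have ynM: "y \<notin> VM"
  proof
    assume "y \<in> VM"
    then have "ltA x y \<or> ltA y x" using chainD[OF cM xM _ xy_ne] by blast
    then show False using i1 i3 rx ry unfolding ltA_def by auto
  qed
  have xpk: "ltA x pk" using i1 i2 i4 rx unfolding ltA_def by auto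
  have ordM: "ltA c d \<longleftrightarrow> aa c < aa d" if "c \<in> VM" "d \<in> VM" for c d
  proof
    show "ltA c d \<Longrightarrow> aa c < aa d" unfolding ltA_def by auto
    assume "aa c < aa d"
    then have "c \<noteq> d" by auto
    then have "ltA c d \<or> ltA d c" using chainD[OF cM that] by blast
    then show "ltA c d" using \<open>aa c < aa d\<close> unfolding ltA_def by auto
  qed
  have ordN: "ltB c d \<longleftrightarrow> bb c < bb d" if "c \<in> VN" "d \<in> VN" for c d
  proof
    show "ltB c d \<Longrightarrow> bb c < bb d" unfolding ltB_def by auto
    assume "bb c < bb d"
    then have "c \<noteq> d" by auto
    then have "ltB c d \<or> ltB d c" using chainD[OF cN that] by blast
    then show "ltB c d" using \<open>bb c < bb d\<close> unfolding ltB_def by auto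
  qed
  define Cs where "Cs = {c \<in> VM \<inter> VN. ltA x c}"
  have pkC: "pk \<in> Cs" unfolding Cs_def using pkM pkN xpk by auto
  obtain z where z: "z \<in> Cs" "\<forall>c. c \<in> Cs \<longrightarrow> aa z \<le> aa c"
    using ex_has_least_nat[of "\<lambda>c. c \<in> Cs" pk aa] pkC by blast
  have zM: "z \<in> VM" and zN: "z \<in> VN" and xz: "ltA x z" using z(1) unfolding Cs_def by auto
  have zmin: "c = z \<or> ltA z c" if "c \<in> Cs" for c
  proof -
    have "aa z \<le> aa c" using z(2) that by blast
    have "c \<in> VM" using that unfolding Cs_def by auto
    show ?thesis
    proof (cases "c = z")
      case False
      then have "aa z \<noteq> aa c"
      proof -
        have "ltA c z \<or> ltA z c" using chainD[OF cM \<open>c\<in>VM\<close> zM False] .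
        then show ?thesis using \<open>aa z \<le> aa c\<close> unfolding ltA_def by auto
      qed
      then show ?thesis using ordM[OF zM \<open>c\<in>VM\<close>] \<open>aa z \<le> aa c\<close> by auto
    qed simp
  qed
  have zpk: "z = pk \<or> ltA z pk" using zmin[OF pkC] by auto
  have rz: "rr z = rr pk" using zpk xz rx unfolding ltA_def by auto
  have yz: "ltB y z"
  proof -
    have "z \<noteq> y" using zM ynM by auto
    then have "ltB y z \<or> ltB z y" using chainD[OF cN yN zN] by blast
    moreover have "\<not> ltB z y" using xz i3 rz rx unfolding ltB_def ltA_def by auto
    ultimately show ?thesis by blast
  qed
  define Ms where "Ms = {c \<in> VM. (c = x \<or> ltA x c) \<and> ltA c z}"
  define Ns where "Ns = {c \<in> VN. (c = y \<or> ltB y c) \<and> ltB c z}"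
  have fMs: "finite Ms" unfolding Ms_def using fM by simp
  have fNs: "finite Ns" unfolding Ns_def using fN by simp
  have MsM: "Ms \<subseteq> VM" unfolding Ms_def by auto
  have NsN: "Ns \<subseteq> VN" unfolding Ns_def by auto
  have xMs: "x \<in> Ms" unfolding Ms_def using xM xz by auto
  have yNs: "y \<in> Ns" unfolding Ns_def using yN yz by auto
  have rMs: "rr c = rr pk" if "c \<in> Ms" for c
    using that xz rz rx unfolding Ms_def ltA_def by auto
  have rNs: "rr c = rr pk" if "c \<in> Ns" for c
    using that yz rz ry unfolding Ns_def ltB_def by auto
  have MsN: "Ms \<inter> VN = {}"
  proof (rule ccontr)
    assume "Ms \<inter> VN \<noteq> {}"
    then obtain c where c: "c \<in> Ms" "c \<in> VN" by blast
    have "c \<noteq> x" using c xnN by auto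
    then have "ltA x c" "ltA c z" "c \<in> VM" using c(1) unfolding Ms_def by auto
    then have "c \<in> Cs" unfolding Cs_def using c by auto
    then have "c = z \<or> ltA z c" by (rule zmin)
    then show False using \<open>ltA c z\<close> ltA_irr ltA_asym by blast
  qed
  have NsM: "Ns \<inter> VM = {}"
  proof (rule ccontr)
    assume "Ns \<inter> VM \<noteq> {}"
    then obtain c where c: "c \<in> Ns" "c \<in> VM" by blast
    have "c \<noteq> y" using c ynM by auto
    then have yc: "ltB y c" and cz: "ltB c z" and cN: "c \<in> VN" using c(1) unfolding Ns_def by auto
    have rc: "rr c = rr pk" using rNs c(1) by auto
    have "c \<noteq> x" using cN xnN by auto
    then have "ltA x c \<or> ltA c x" using chainD[OF cM xM c(2)] by blast
    moreover have "\<not> ltA c x" using yc i1 rc ry unfolding ltA_def ltB_def by auto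
    ultimately have "ltA x c" by blast
    then have "c \<in> Cs" unfolding Cs_def using c cN by auto
    then have "c = z \<or> ltA z c" by (rule zmin)
    then show False using cz rc rz ltB_irr unfolding ltA_def ltB_def by auto
  qed
  have cleanP: "ltA m c" if "m \<in> VM" "ltA m x" "c \<in> Ns" for m c
  proof (rule ccontr)
    assume nmc: "\<not> ltA m c"
    have rc: "rr c = rr pk" using rNs that(3) by auto
    have "aa y \<le> aa c"
    proof -
      have "c = y \<or> ltB y c" using that(3) unfolding Ns_def by auto
      then show ?thesis using rc ry unfolding ltB_def by auto
    qed
    have "bb y \<le> bb c"
    proof -
      have "c = y \<or> ltB y c" using that(3) unfolding Ns_def by auto
      then show ?thesis unfolding ltB_def by auto
    qed
    have rm: "rr m = rr pk" and bm: "bb c \<le> bb m"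
      using nmc that(2) \<open>aa y \<le> aa c\<close> i1 rc rx unfolding ltA_def by auto
    have "Viol (m, y)" unfolding Viol_def
      using that(1,2) yN rm ry i1 i2 i3 i4 bm \<open>bb y \<le> bb c\<close> ynM rx
      unfolding ltA_def by auto
    then have "mu (x, y) \<le> mu (m, y)" by (rule minq)
    moreover have "card {c\<in>VM. ltA c m} < card {c\<in>VM. ltA c x}"
      by (rule card_less_pred[OF fM that(1)]) (use that(2) ltA_trans ltA_irr in blast)+
    ultimately show False unfolding mu_def by auto
  qed
  have cleanQ: "ltB n c" if "n \<in> VN" "ltB n y" "c \<in> Ms" for n c
  proof (rule ccontr)
    assume nnc: "\<not> ltB n c"
    have rc: "rr c = rr pk" using rMs that(3) by auto
    have "bb x \<le> bb c"
    proof -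
      have "c = x \<or> ltA x c" using that(3) unfolding Ms_def by auto
      then show ?thesis using rc rx unfolding ltA_def by auto
    qed
    have "aa x \<le> aa c"
    proof -
      have "c = x \<or> ltA x c" using that(3) unfolding Ms_def by auto
      then show ?thesis unfolding ltA_def by auto
    qed
    have rn: "rr n = rr pk" and an: "aa c \<le> aa n"
      using nnc that(2) \<open>bb x \<le> bb c\<close> i3 rc ry unfolding ltB_def by auto
    have "Viol (x, n)" unfolding Viol_def
      using that(1,2) xM rn rx i1 i2 i3 i4 an \<open>aa x \<le> aa c\<close> xnN ry
      unfolding ltB_def by auto
    then have "mu (x, y) \<le> mu (x, n)" by (rule minq)
    moreover have "card {c\<in>VN. ltB c n} < card {c\<in>VN. ltB c y}"
      by (rule card_less_pred[OF fN that(1)]) (use that(2) ltB_trans ltB_irr in blast)+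
    ultimately show False unfolding mu_def by auto
  qed
  show ?thesis
  proof (cases "card Ms \<le> card Ns")
    case True
    obtain Y where Y: "Y \<subseteq> Ns" "card Y = card Ms" "finite Y"
      using obtain_subset_with_card_n[OF True] by blast
    define V' where "V' = (VM - Ms) \<union> Y"
    have YM: "Y \<inter> VM = {}" using Y(1) NsM by blast
    have cardV: "card V' = card VM"
    proof -
      have "card V' = card (VM - Ms) + card Y"
        unfolding V'_def by (rule card_Un_disjoint) (use fM Y YM in auto)
      also have "card (VM - Ms) = card VM - card Ms" using card_Diff_subset[OF fMs MsM] .
      finally show ?thesis using Y(2) card_mono[OF fM MsM] by simp
    qed
    have int: "V' \<inter> VN = (VM \<inter> VN) \<union> Y"
      unfolding V'_def using MsN Y(1) NsN by blast
    have cardI: "card (V' \<inter> VN) = card (VM \<inter> VN) + card Y"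
      unfolding int by (rule card_Un_disjoint) (use fM Y YM in auto)
    have "card Ms > 0" using xMs fMs card_gt_0_iff by blast
    then have "card (VM \<inter> VN) < card (V' \<inter> VN)" using cardI Y(2) by simp
    moreover have "V' \<subseteq> VM \<union> VN" unfolding V'_def using Y(1) NsN by blast
    moreover have "\<forall>w\<in>V' - VM. rr w = rr pk" unfolding V'_def using Y(1) rNs by blast
    moreover have "chainR ltA V'"
      unfolding chainR_def
    proof (intro ballI impI)
      fix c d assume c: "c \<in> V'" and d: "d \<in> V'" and cd: "c \<noteq> d"
      have cross: "ltA m w \<or> ltA w m" if m: "m \<in> VM - Ms" and w: "w \<in> Y" for m w
      proof -
        have wNs: "w \<in> Ns" using w Y(1) by blast
        have "m \<noteq> x" using m xMs by blast
        then have "ltA m x \<or> ltA x m" using chainD[OF cM _ xM] m by blast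
        then show ?thesis
        proof
          assume "ltA m x" then show ?thesis using cleanP[OF _ _ wNs] m by blast
        next
          assume xm: "ltA x m"
          then have "\<not> ltA m z" using m unfolding Ms_def by blast
          moreover have "m \<noteq> z \<Longrightarrow> ltA m z \<or> ltA z m" using chainD[OF cM _ zM] m by blast
          ultimately have "m = z \<or> ltA z m" by blast
          moreover have "ltA w z"
          proof -
            have "ltB w z" using wNs unfolding Ns_def by blast
            then show ?thesis using ltAB_same[of w z] rNs[OF wNs] rz by simp
          qed
          ultimately show ?thesis using ltA_trans by blast
        qed
      qed
      show "ltA c d \<or> ltA d c"
      proof (cases "c \<in> Y")
        case cY: True
        show ?thesis
        proof (cases "d \<in> Y")
          case True
          have cdN: "c \<in> Ns" "d \<in> Ns" using cY True Y(1) by blast+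
          have "c \<in> VN" "d \<in> VN" using cdN NsN by blast+
          moreover have "rr c = rr d" using rNs[OF cdN(1)] rNs[OF cdN(2)] by simp
          ultimately show ?thesis using chainD[OF cN _ _ cd] ltAB_same by metis
        next
          case False
          then have "d \<in> VM - Ms" using d unfolding V'_def by blast
          then show ?thesis using cross cY by blast
        qed
      next
        case cY: False
        then have cM': "c \<in> VM - Ms" using c unfolding V'_def by blast
        show ?thesis
        proof (cases "d \<in> Y")
          case True
          then show ?thesis using cross cM' by blast
        next
          case False
          then have "d \<in> VM" using d unfolding V'_def by blast
          then show ?thesis using chainD[OF cM _ _ cd] cM' by blast
        qed
      qed
    qed
    ultimately have "V' \<subseteq> VM \<union> VN \<and> chainR ltA V' \<and> card V' = card VM \<and>
            card (VM \<inter> VN) < card (V' \<inter> VN) \<and> (\<forall>z\<in>V' - VM. rr z = rr pk)"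
      using cardV by (intro conjI) simp_all
    then show ?thesis by (intro disjI1 exI[of _ V'])
  next
    case False
    then have le: "card Ns \<le> card Ms" by simp
    obtain X where X: "X \<subseteq> Ms" "card X = card Ns" "finite X"
      using obtain_subset_with_card_n[OF le] by blast
    define V' where "V' = (VN - Ns) \<union> X"
    have XN: "X \<inter> VN = {}" using X(1) MsN by blast
    have cardV: "card V' = card VN"
    proof -
      have "card V' = card (VN - Ns) + card X"
        unfolding V'_def by (rule card_Un_disjoint) (use fN X XN in auto)
      also have "card (VN - Ns) = card VN - card Ns" using card_Diff_subset[OF fNs NsN] .
      finally show ?thesis using X(2) card_mono[OF fN NsN] by simp
    qed
    have int: "V' \<inter> VM = (VM \<inter> VN) \<union> X"
      unfolding V'_def using NsM X(1) MsM by blast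
    have cardI: "card (V' \<inter> VM) = card (VM \<inter> VN) + card X"
      unfolding int by (rule card_Un_disjoint) (use fM X XN in auto)
    have "card Ns > 0" using yNs fNs card_gt_0_iff by blast
    then have "card (VM \<inter> VN) < card (V' \<inter> VM)" using cardI X(2) by simp
    moreover have "V' \<subseteq> VM \<union> VN" unfolding V'_def using X(1) MsM by blast
    moreover have "\<forall>w\<in>V' - VN. rr w = rr pk" unfolding V'_def using X(1) rMs by blast
    moreover have "chainR ltB V'"
      unfolding chainR_def
    proof (intro ballI impI)
      fix c d assume c: "c \<in> V'" and d: "d \<in> V'" and cd: "c \<noteq> d"
      have cross: "ltB n w \<or> ltB w n" if n: "n \<in> VN - Ns" and w: "w \<in> X" for n w
      proof -
        have wMs: "w \<in> Ms" using w X(1) by blast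
        have "n \<noteq> y" using n yNs by blast
        then have "ltB n y \<or> ltB y n" using chainD[OF cN _ yN] n by blast
        then show ?thesis
        proof
          assume "ltB n y" then show ?thesis using cleanQ[OF _ _ wMs] n by blast
        next
          assume yn: "ltB y n"
          then have "\<not> ltB n z" using n unfolding Ns_def by blast
          moreover have "n \<noteq> z \<Longrightarrow> ltB n z \<or> ltB z n" using chainD[OF cN _ zN] n by blast
          ultimately have "n = z \<or> ltB z n" by blast
          moreover have "ltB w z"
          proof -
            have "ltA w z" using wMs unfolding Ms_def by blast
            then show ?thesis using ltAB_same[of w z] rMs[OF wMs] rz by simp
          qed
          ultimately show ?thesis using ltB_trans by blast
        qed
      qed
      show "ltB c d \<or> ltB d c"
      proof (cases "c \<in> X")
        case cX: True
        show ?thesis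
        proof (cases "d \<in> X")
          case True
          have cdM: "c \<in> Ms" "d \<in> Ms" using cX True X(1) by blast+
          have "c \<in> VM" "d \<in> VM" using cdM MsM by blast+
          moreover have "rr c = rr d" using rMs[OF cdM(1)] rMs[OF cdM(2)] by simp
          ultimately show ?thesis using chainD[OF cM _ _ cd] ltAB_same by metis
        next
          case False
          then have "d \<in> VN - Ns" using d unfolding V'_def by blast
          then show ?thesis using cross cX by blast
        qed
      next
        case cX: False
        then have cN': "c \<in> VN - Ns" using c unfolding V'_def by blast
        show ?thesis
        proof (cases "d \<in> X")
          case True
          then show ?thesis using cross cN' by blast
        next
          case False
          then have "d \<in> VN" using d unfolding V'_def by blast
          then show ?thesis using chainD[OF cN _ _ cd] cN' by blast
        qed
      qed
    qed
    ultimately have "V' \<subseteq> VM \<union> VN \<and> chainR ltB V' \<and> card V' = card VN \<and>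
            card (VM \<inter> VN) < card (V' \<inter> VM) \<and> (\<forall>z\<in>V' - VN. rr z = rr pk)"
      using cardV by (intro conjI) simp_all
    then show ?thesis by (intro disjI2 exI[of _ V'])
  qed
qed

definition indm :: "var set \<Rightarrow> mon" where
  "indm V = Abs_poly_mapping (\<lambda>x. if x \<in> V then 1 else 0)"

lemma lookup_indm: "finite V \<Longrightarrow> Poly_Mapping.lookup (indm V) x = (if x \<in> V then 1 else 0)"
  unfolding indm_def by (subst lookup_Abs_poly_mapping) (auto elim: finite_subset[rotated])

lemma keys_indm:
  assumes "finite V" shows "Poly_Mapping.keys (indm V) = V"
proof -
  have "x \<in> Poly_Mapping.keys (indm V) \<longleftrightarrow> x \<in> V" for x
    using lookup_indm[OF assms, of x] by (simp add: in_keys_iff)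
  then show ?thesis by blast
qed

lemma ind_indm: "inj_on f {..<n} \<Longrightarrow> ind f n = indm (f ` {..<n})"
  by (rule poly_mapping_eqI) (simp add: lookup_ind lookup_indm)

lemma pick_facts:
  assumes "finite R" "card R = n"
  shows "\<And>i. i < n \<Longrightarrow> pick R i \<in> R" "\<And>i j. i < j \<Longrightarrow> j < n \<Longrightarrow> pick R i < pick R j"
  using pick_in_set_le pick_mono_le assms by auto

lemma minor_LM:
  fixes A :: "var mat"
  assumes slo: "strict_linear_order_on Q ord"
    and entQ: "\<forall>i<dim_row A. \<forall>j<dim_col A. A $$ (i, j) \<in> Q"
    and injA: "\<forall>i<dim_row A. \<forall>j<dim_col A. \<forall>i'<dim_row A. \<forall>j'<dim_col A.
                 A $$ (i, j) = A $$ (i', j') \<longrightarrow> i = i' \<and> j = j'"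
    and cons: "consistent ord A"
    and R: "R \<subseteq> {..<dim_row A}" and C: "C \<subseteq> {..<dim_col A}"
    and cR: "card R = n" and cC: "card C = n"
  shows "LM ord (det (submatrix (map_mat Var A) R C) :: 'a::field mpoly)
           = indm ((\<lambda>i. A $$ (pick R i, pick C i)) ` {..<n})"
proof -
  have fR: "finite R" using R finite_subset by blast
  have fC: "finite C" using C finite_subset by blast
  note pR = pick_facts[OF fR cR] and pC = pick_facts[OF fC cC]
  have pRlt: "pick R i < dim_row A" if "i < n" for i using pR(1)[OF that] R by auto
  have pClt: "pick C i < dim_col A" if "i < n" for i using pC(1)[OF that] C by auto
  have pRinj: "pick R i = pick R i' \<Longrightarrow> i < n \<Longrightarrow> i' < n \<Longrightarrow> i = i'" for i i'
    using pR(2)[of i i'] pR(2)[of i' i] by (cases "i < i'"; cases "i' < i") auto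
  have pCinj: "pick C i = pick C i' \<Longrightarrow> i < n \<Longrightarrow> i' < n \<Longrightarrow> i = i'" for i i'
    using pC(2)[of i i'] pC(2)[of i' i] by (cases "i < i'"; cases "i' < i") auto
  have dR: "card {i. i < dim_row (map_mat Var A :: 'a mpoly mat) \<and> i \<in> R} = n"
  proof -
    have "{i. i < dim_row (map_mat Var A :: 'a mpoly mat) \<and> i \<in> R} = R" using R by auto
    then show ?thesis using cR by simp
  qed
  have dC: "card {i. i < dim_col (map_mat Var A :: 'a mpoly mat) \<and> i \<in> C} = n"
  proof -
    have "{i. i < dim_col (map_mat Var A :: 'a mpoly mat) \<and> i \<in> C} = C" using C by auto
    then show ?thesis using cC by simp
  qed
  have sub: "submatrix (map_mat Var A) R C = (mat n n (\<lambda>(i,j). Var (A $$ (pick R i, pick C j))) :: 'a mpoly mat)"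
  proof (rule eq_matI)
    show "dim_row (submatrix (map_mat Var A) R C) = dim_row (mat n n (\<lambda>(i,j). Var (A $$ (pick R i, pick C j))) :: 'a mpoly mat)"
      using dR by (simp add: dim_submatrix)
    show "dim_col (submatrix (map_mat Var A) R C) = dim_col (mat n n (\<lambda>(i,j). Var (A $$ (pick R i, pick C j))) :: 'a mpoly mat)"
      using dC by (simp add: dim_submatrix)
    fix i j assume ij: "i < dim_row (mat n n (\<lambda>(i,j). Var (A $$ (pick R i, pick C j))) :: 'a mpoly mat)"
      "j < dim_col (mat n n (\<lambda>(i,j). Var (A $$ (pick R i, pick C j))) :: 'a mpoly mat)"
    then have "i < n" "j < n" by auto
    then show "submatrix (map_mat Var A) R C $$ (i, j) = (mat n n (\<lambda>(i,j). Var (A $$ (pick R i, pick C j))) :: 'a mpoly mat) $$ (i, j)"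
      using submatrix_index[of i "map_mat Var A" R j C] dR dC pRlt pClt by simp
  qed
  have core: "LM ord (det (mat n n (\<lambda>(i,j). Var (A $$ (pick R i, pick C j)))) :: 'a mpoly)
      = ind (\<lambda>i. A $$ (pick R i, pick C i)) n"
  proof (rule det_LM_core[OF slo])
    show "\<forall>i<n. \<forall>j<n. A $$ (pick R i, pick C j) \<in> Q" using entQ pRlt pClt by blast
    show "\<forall>i<n. \<forall>j<n. \<forall>i'<n. \<forall>j'<n. A $$ (pick R i, pick C j) = A $$ (pick R i', pick C j') \<longrightarrow> i = i' \<and> j = j'"
    proof (intro allI impI)
      fix i j i' j' assume a: "i < n" "j < n" "i' < n" "j' < n" "A $$ (pick R i, pick C j) = A $$ (pick R i', pick C j')"
      have "pick R i = pick R i' \<and> pick C j = pick C j'"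
        using injA[rule_format, OF pRlt[OF a(1)] pClt[OF a(2)] pRlt[OF a(3)] pClt[OF a(4)] a(5)] .
      then show "i = i' \<and> j = j'" using pRinj pCinj a by blast
    qed
    have cons1: "\<And>i j j'. i < dim_row A \<Longrightarrow> j < dim_col A \<Longrightarrow> j' < dim_col A \<Longrightarrow> j < j' \<Longrightarrow> (A $$ (i, j), A $$ (i, j')) \<in> ord"
      using cons unfolding consistent_def by blast
    have cons2: "\<And>i i' j. i < dim_row A \<Longrightarrow> i' < dim_row A \<Longrightarrow> j < dim_col A \<Longrightarrow> i < i' \<Longrightarrow> (A $$ (i, j), A $$ (i', j)) \<in> ord"
      using cons unfolding consistent_def by blast
    show "\<forall>i<n. \<forall>j<n. \<forall>j'<n. j < j' \<longrightarrow> (A $$ (pick R i, pick C j), A $$ (pick R i, pick C j')) \<in> ord"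
    proof (intro allI impI)
      fix i j j' assume a: "i < n" "j < n" "j' < n" "j < j'"
      show "(A $$ (pick R i, pick C j), A $$ (pick R i, pick C j')) \<in> ord"
        by (rule cons1[OF pRlt[OF a(1)] pClt[OF a(2)] pClt[OF a(3)] pC(2)[OF a(4) a(3)]])
    qed
    show "\<forall>i<n. \<forall>i'<n. \<forall>j<n. i < i' \<longrightarrow> (A $$ (pick R i, pick C j), A $$ (pick R i', pick C j)) \<in> ord"
    proof (intro allI impI)
      fix i i' j assume a: "i < n" "i' < n" "j < n" "i < i'"
      show "(A $$ (pick R i, pick C j), A $$ (pick R i', pick C j)) \<in> ord"
        by (rule cons2[OF pRlt[OF a(1)] pRlt[OF a(2)] pClt[OF a(3)] pR(2)[OF a(4) a(2)]])
    qed
  qed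
  have inj: "inj_on (\<lambda>i. A $$ (pick R i, pick C i)) {..<n}"
  proof (rule inj_onI)
    fix i i' assume a: "i \<in> {..<n}" "i' \<in> {..<n}" "A $$ (pick R i, pick C i) = A $$ (pick R i', pick C i')"
    then have "i < n" "i' < n" by auto
    then have "pick R i = pick R i'"
      using injA[rule_format, OF pRlt pClt pRlt pClt a(3)] by blast
    then show "i = i'" using pRinj \<open>i < n\<close> \<open>i' < n\<close> by blast
  qed
  show ?thesis unfolding sub core ind_indm[OF inj] ..
qed

definition posLess :: "nat \<times> nat \<Rightarrow> nat \<times> nat \<Rightarrow> bool" where
  "posLess p q \<longleftrightarrow> fst p < fst q \<and> snd p < snd q"

lemma chain_pick:
  assumes fS: "finite S"
    and ch: "\<forall>p\<in>S. \<forall>q\<in>S. p \<noteq> q \<longrightarrow> posLess p q \<or> posLess q p"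
    and cS: "card S = u"
  shows "card (fst ` S) = u" "card (snd ` S) = u"
    "(\<lambda>i. (pick (fst ` S) i, pick (snd ` S) i)) ` {..<u} = S"
proof -
  have injf: "inj_on fst S"
  proof (rule inj_onI)
    fix p q assume pq: "p \<in> S" "q \<in> S" "fst p = fst q"
    show "p = q"
    proof (rule ccontr)
      assume "p \<noteq> q"
      then have "posLess p q \<or> posLess q p" using ch pq(1,2) by blast
      then show False using pq(3) unfolding posLess_def by auto
    qed
  qed
  have injs: "inj_on snd S"
  proof (rule inj_onI)
    fix p q assume pq: "p \<in> S" "q \<in> S" "snd p = snd q"
    show "p = q"
    proof (rule ccontr)
      assume "p \<noteq> q"
      then have "posLess p q \<or> posLess q p" using ch pq(1,2) by blast
      then show False using pq(3) unfolding posLess_def by auto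
    qed
  qed
  show cf: "card (fst ` S) = u" using card_image[OF injf] cS by simp
  show cs: "card (snd ` S) = u" using card_image[OF injs] cS by simp
  have key: "card {a \<in> fst ` S. a < fst p} = card {b \<in> snd ` S. b < snd p}" if p: "p \<in> S" for p
  proof -
    have e1: "{a \<in> fst ` S. a < fst p} = fst ` {q \<in> S. fst q < fst p}" by auto
    have e2: "{b \<in> snd ` S. b < snd p} = snd ` {q \<in> S. snd q < snd p}" by auto
    have e3: "{q \<in> S. fst q < fst p} = {q \<in> S. snd q < snd p}"
    proof (intro Set.set_eqI iffI)
      fix q assume "q \<in> {q \<in> S. fst q < fst p}"
      then show "q \<in> {q \<in> S. snd q < snd p}" using ch p unfolding posLess_def by force
    next
      fix q assume "q \<in> {q \<in> S. snd q < snd p}"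
      then show "q \<in> {q \<in> S. fst q < fst p}" using ch p unfolding posLess_def by force
    qed
    have "card (fst ` {q \<in> S. fst q < fst p}) = card {q \<in> S. fst q < fst p}"
      by (rule card_image) (rule inj_on_subset[OF injf], auto)
    moreover have "card (snd ` {q \<in> S. snd q < snd p}) = card {q \<in> S. snd q < snd p}"
      by (rule card_image) (rule inj_on_subset[OF injs], auto)
    ultimately show ?thesis unfolding e1 e2 e3 by simp
  qed
  have kp: "pick (fst ` S) (card {a \<in> fst ` S. a < fst p}) = fst p \<and>
            pick (snd ` S) (card {a \<in> fst ` S. a < fst p}) = snd p \<and>
            card {a \<in> fst ` S. a < fst p} < u" if p: "p \<in> S" for p
  proof (intro conjI)
    show "pick (fst ` S) (card {a \<in> fst ` S. a < fst p}) = fst p"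
      using pick_card_in_set[of "fst p" "fst ` S"] p by auto
    show "pick (snd ` S) (card {a \<in> fst ` S. a < fst p}) = snd p"
      unfolding key[OF p] using pick_card_in_set[of "snd p" "snd ` S"] p by auto
    have "{a \<in> fst ` S. a < fst p} \<subset> fst ` S" using p by auto
    then show "card {a \<in> fst ` S. a < fst p} < u" using cf fS psubset_card_mono by (metis finite_imageI)
  qed
  show "(\<lambda>i. (pick (fst ` S) i, pick (snd ` S) i)) ` {..<u} = S"
  proof (intro Set.set_eqI iffI)
    fix p assume "p \<in> S"
    then show "p \<in> (\<lambda>i. (pick (fst ` S) i, pick (snd ` S) i)) ` {..<u}"
      using kp[of p] by (intro image_eqI[of _ _ "card {a \<in> fst ` S. a < fst p}"]) auto
  next
    fix p assume "p \<in> (\<lambda>i. (pick (fst ` S) i, pick (snd ` S) i)) ` {..<u}"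
    then obtain i where i: "i < u" "p = (pick (fst ` S) i, pick (snd ` S) i)" by auto
    have "pick (fst ` S) i \<in> fst ` S" using pick_in_set_le[of i "fst ` S"] i cf by auto
    then obtain q where q: "q \<in> S" "fst q = pick (fst ` S) i" by auto
    have "card {a \<in> fst ` S. a < fst q} = i" using card_pick_le[of i "fst ` S"] i cf q by auto
    then have "p = q" using kp[OF q(1)] i q by (metis prod.collapse)
    then show "p \<in> S" using q by simp
  qed
qed

lemma transfer_minors:
  fixes A :: "var mat" and lt :: "var \<Rightarrow> var \<Rightarrow> bool"
  assumes slo: "strict_linear_order_on Q ord"
    and entQ: "\<forall>i<dim_row A. \<forall>j<dim_col A. A $$ (i, j) \<in> Q"
    and injA: "\<forall>i<dim_row A. \<forall>j<dim_col A. \<forall>i'<dim_row A. \<forall>j'<dim_col A.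
                 A $$ (i, j) = A $$ (i', j') \<longrightarrow> i = i' \<and> j = j'"
    and cons: "consistent ord A"
    and iso: "\<forall>p\<in>{..<dim_row A} \<times> {..<dim_col A}. \<forall>q\<in>{..<dim_row A} \<times> {..<dim_col A}.
               posLess p q \<longleftrightarrow> lt (A $$ p) (A $$ q)"
  shows "M \<in> minors u A \<Longrightarrow> \<exists>V. V \<subseteq> (\<lambda>p. A $$ p) ` ({..<dim_row A} \<times> {..<dim_col A}) \<and>
            chainR lt V \<and> card V = u \<and> LM ord (M :: 'a::field mpoly) = indm V"
    and "V \<subseteq> (\<lambda>p. A $$ p) ` ({..<dim_row A} \<times> {..<dim_col A}) \<Longrightarrow> chainR lt V \<Longrightarrow> card V = u \<Longrightarrow>
         \<exists>P \<in> minors u A. LM ord (P :: 'a::field mpoly) = indm V"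
proof -
  let ?rect = "{..<dim_row A} \<times> {..<dim_col A}"
  have injr: "inj_on (\<lambda>p. A $$ p) ?rect"
    by (rule inj_onI) (use injA in auto)
  {
    assume "M \<in> minors u A"
    then obtain R C where RC: "M = det (submatrix (map_mat Var A) R C)" "R \<subseteq> {..<dim_row A}"
      "C \<subseteq> {..<dim_col A}" "card R = u" "card C = u"
      unfolding minors_def by blast
    have fR: "finite R" using RC(2) finite_subset by blast
    have fC: "finite C" using RC(3) finite_subset by blast
    note pR = pick_facts[OF fR RC(4)] and pC = pick_facts[OF fC RC(5)]
    define f where "f i = (pick R i, pick C i)" for i
    have frect: "f i \<in> ?rect" if "i < u" for i using pR(1)[OF that] pC(1)[OF that] RC(2,3) unfolding f_def by auto
    have finj: "inj_on f {..<u}"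
    proof (rule inj_onI)
      fix i i' assume "i \<in> {..<u}" "i' \<in> {..<u}" "f i = f i'"
      then show "i = i'" using pR(2)[of i i'] pR(2)[of i' i] unfolding f_def
        by (cases "i < i'"; cases "i' < i") auto
    qed
    define V where "V = (\<lambda>p. A $$ p) ` f ` {..<u}"
    have "LM ord (M :: 'a mpoly) = indm ((\<lambda>i. A $$ (pick R i, pick C i)) ` {..<u})"
      unfolding RC(1) by (rule minor_LM[OF slo entQ injA cons RC(2-5)])
    also have "(\<lambda>i. A $$ (pick R i, pick C i)) ` {..<u} = V" unfolding V_def f_def by auto
    finally have LMM: "LM ord M = indm V" .
    have Vsub: "V \<subseteq> (\<lambda>p. A $$ p) ` ?rect" unfolding V_def using frect by auto
    have cV: "card V = u"
    proof -
      have fsub: "f ` {..<u} \<subseteq> ?rect" using frect by blast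
      have "inj_on (\<lambda>p. A $$ p) (f ` {..<u})" by (rule inj_on_subset[OF injr fsub])
      then have "card V = card (f ` {..<u})" unfolding V_def by (rule card_image)
      also have "\<dots> = u" using card_image[OF finj] by simp
      finally show ?thesis .
    qed
    have chV: "chainR lt V" unfolding chainR_def
    proof (intro ballI impI)
      fix x y assume "x \<in> V" "y \<in> V" "x \<noteq> y"
      then obtain i j where ij: "i < u" "j < u" "x = A $$ f i" "y = A $$ f j" unfolding V_def by auto
      then have "i \<noteq> j" using \<open>x \<noteq> y\<close> by auto
      then have "posLess (f i) (f j) \<or> posLess (f j) (f i)"
        using pR(2) pC(2) ij unfolding f_def posLess_def by (cases "i < j") auto
      then show "lt x y \<or> lt y x" using iso frect ij by auto
    qed
    show "\<exists>V. V \<subseteq> (\<lambda>p. A $$ p) ` ?rect \<and> chainR lt V \<and> card V = u \<and> LM ord (M :: 'a::field mpoly) = indm V"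
      using LMM Vsub cV chV by blast
  }
  {
    assume Vsub: "V \<subseteq> (\<lambda>p. A $$ p) ` ?rect" and chV: "chainR lt V" and cV: "card V = u"
    define S where "S = {p \<in> ?rect. A $$ p \<in> V}"
    have fS: "finite S" unfolding S_def by (rule finite_subset[of _ ?rect]) auto
    have imS: "(\<lambda>p. A $$ p) ` S = V" unfolding S_def using Vsub by blast
    have injS: "inj_on (\<lambda>p. A $$ p) S" by (rule inj_on_subset[OF injr]) (auto simp: S_def)
    have cS: "card S = u" using card_image[OF injS] imS cV by simp
    have chS: "\<forall>p\<in>S. \<forall>q\<in>S. p \<noteq> q \<longrightarrow> posLess p q \<or> posLess q p"
    proof (intro ballI impI)
      fix p q assume pq: "p \<in> S" "q \<in> S" "p \<noteq> q"
      then have "A $$ p \<noteq> A $$ q" using injS by (meson inj_on_def)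
      moreover have "A $$ p \<in> V" "A $$ q \<in> V" using pq unfolding S_def by auto
      ultimately have "lt (A $$ p) (A $$ q) \<or> lt (A $$ q) (A $$ p)" using chV unfolding chainR_def by blast
      moreover have "p \<in> ?rect" "q \<in> ?rect" using pq unfolding S_def by auto
      ultimately show "posLess p q \<or> posLess q p" using iso by blast
    qed
    note cp = chain_pick[OF fS chS cS]
    define R where "R = fst ` S"
    define C where "C = snd ` S"
    have R: "R \<subseteq> {..<dim_row A}" unfolding R_def S_def by auto
    have C: "C \<subseteq> {..<dim_col A}" unfolding C_def S_def by auto
    have "LM ord (det (submatrix (map_mat Var A) R C) :: 'a mpoly) = indm ((\<lambda>i. A $$ (pick R i, pick C i)) ` {..<u})"
      by (rule minor_LM[OF slo entQ injA cons R C]) (use cp in \<open>simp_all add: R_def C_def\<close>)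
    also have "(\<lambda>i. A $$ (pick R i, pick C i)) ` {..<u} = (\<lambda>p. A $$ p) ` (\<lambda>i. (pick R i, pick C i)) ` {..<u}"
      by (simp add: image_image)
    also have "\<dots> = V" using cp(3) imS unfolding R_def C_def by simp
    finally have "LM ord (det (submatrix (map_mat Var A) R C) :: 'a mpoly) = indm V" .
    moreover have "det (submatrix (map_mat Var A) R C) \<in> minors u A"
      unfolding minors_def using R C cp(1,2) unfolding R_def C_def by blast
    ultimately show "\<exists>P \<in> minors u A. LM ord (P :: 'a::field mpoly) = indm V" by blast
  }
qed

definition keyless :: "nat \<times> nat \<Rightarrow> nat \<times> nat \<Rightarrow> bool" where
  "keyless x y \<longleftrightarrow> snd x < snd y \<or> snd x = snd y \<and> fst x < fst y"

definition blk :: "nat \<Rightarrow> (nat \<Rightarrow> bool) \<Rightarrow> (nat \<Rightarrow> nat) \<Rightarrow> (nat \<times> nat) list" where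
  "blk nr P f = concat (map (\<lambda>k. map (\<lambda>j. (j, k)) [0..<f k]) (filter P [0..<nr]))"

lemma blk_set: "set (blk nr P f) = {(j, k). k < nr \<and> P k \<and> j < f k}"
  unfolding blk_def by auto

lemma blk_sorted_aux:
  "sorted_wrt (<) ks \<Longrightarrow> sorted_wrt keyless (concat (map (\<lambda>k. map (\<lambda>j. (j, k)) [0..<f k]) ks))"
proof (induction ks)
  case Nil
  then show ?case by simp
next
  case (Cons k ks)
  have "sorted_wrt keyless (map (\<lambda>j. (j, k)) [0..<f k])"
    unfolding sorted_wrt_map keyless_def by (rule sorted_wrt_mono_rel[of _ "(<)"]) auto
  moreover have "sorted_wrt keyless (concat (map (\<lambda>k. map (\<lambda>j. (j, k)) [0..<f k]) ks))"
    using Cons by simp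
  moreover have "\<forall>x\<in>set (map (\<lambda>j. (j, k)) [0..<f k]). \<forall>y\<in>set (concat (map (\<lambda>k. map (\<lambda>j. (j, k)) [0..<f k]) ks)). keyless x y"
    using Cons.prems unfolding keyless_def by auto
  ultimately show ?case by (simp add: sorted_wrt_append)
qed

lemma blk_sorted: "sorted_wrt keyless (blk nr P f)"
  unfolding blk_def by (rule blk_sorted_aux) (simp add: sorted_wrt_filter)

lemma keyless_irr: "\<not> keyless x x" unfolding keyless_def by auto
lemma keyless_asym: "keyless x y \<Longrightarrow> \<not> keyless y x" unfolding keyless_def by auto

lemma sorted_order:
  assumes "sorted_wrt keyless L" "c < length L" "c' < length L"
  shows "c < c' \<longleftrightarrow> keyless (L ! c) (L ! c')"
proof
  show "c < c' \<Longrightarrow> keyless (L ! c) (L ! c')" using sorted_wrt_nth_less assms by blast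
  assume k: "keyless (L ! c) (L ! c')"
  show "c < c'"
  proof (rule ccontr)
    assume "\<not> c < c'"
    then have "c' < c \<or> c' = c" by auto
    then show False
    proof
      assume "c' < c"
      then have "keyless (L ! c') (L ! c)" using sorted_wrt_nth_less assms by blast
      then show False using k keyless_asym by blast
    next
      assume "c' = c" then show False using k keyless_irr by simp
    qed
  qed
qed

lemma sorted_inj:
  assumes "sorted_wrt keyless L" "c < length L" "c' < length L" "L ! c = L ! c'"
  shows "c = c'"
  using sorted_order[OF assms(1,2,3)] sorted_order[OF assms(1,3,2)] assms(4) keyless_irr
  by (metis nat_neq_iff)

lemma sink_facts:
  fixes L :: "(nat \<times> nat) list" and d :: nat
  assumes sL: "sorted_wrt keyless L"
  defines "A \<equiv> mat d (length L) (\<lambda>(i, c). (i, fst (L ! c), snd (L ! c)))"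
  shows "\<forall>i<dim_row A. \<forall>j<dim_col A. \<forall>i'<dim_row A. \<forall>j'<dim_col A. A $$ (i, j) = A $$ (i', j') \<longrightarrow> i = i' \<and> j = j'"
    and "\<forall>p\<in>{..<dim_row A} \<times> {..<dim_col A}. \<forall>q\<in>{..<dim_row A} \<times> {..<dim_col A}. posLess p q \<longleftrightarrow> ltA (A $$ p) (A $$ q)"
    and "(\<lambda>p. A $$ p) ` ({..<dim_row A} \<times> {..<dim_col A}) = {x. aa x < d \<and> (bb x, rr x) \<in> set L}"
proof -
  have ent: "A $$ (i, c) = (i, fst (L ! c), snd (L ! c))" if "i < d" "c < length L" for i c
    unfolding A_def using that by simp
  have dims: "dim_row A = d" "dim_col A = length L" unfolding A_def by auto
  show "\<forall>i<dim_row A. \<forall>j<dim_col A. \<forall>i'<dim_row A. \<forall>j'<dim_col A. A $$ (i, j) = A $$ (i', j') \<longrightarrow> i = i' \<and> j = j'"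
  proof (intro allI impI)
    fix i j i' j' assume a: "i < dim_row A" "j < dim_col A" "i' < dim_row A" "j' < dim_col A" "A $$ (i, j) = A $$ (i', j')"
    then have "i = i'" "L ! j = L ! j'" using ent dims by (auto simp: prod_eq_iff)
    then show "i = i' \<and> j = j'" using sorted_inj[OF sL] a dims by auto
  qed
  show "\<forall>p\<in>{..<dim_row A} \<times> {..<dim_col A}. \<forall>q\<in>{..<dim_row A} \<times> {..<dim_col A}. posLess p q \<longleftrightarrow> ltA (A $$ p) (A $$ q)"
  proof (intro ballI)
    fix p q assume p: "p \<in> {..<dim_row A} \<times> {..<dim_col A}" and q: "q \<in> {..<dim_row A} \<times> {..<dim_col A}"
    obtain i c where pe: "p = (i, c)" by (cases p)
    obtain i' c' where qe: "q = (i', c')" by (cases q)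
    have b: "i < d" "c < length L" "i' < d" "c' < length L" using p q pe qe dims by auto
    show "posLess p q \<longleftrightarrow> ltA (A $$ p) (A $$ q)"
      unfolding pe qe posLess_def ltA_def using ent[OF b(1,2)] ent[OF b(3,4)] sorted_order[OF sL b(2,4)]
      by (simp add: aa_def bb_def rr_def keyless_def)
  qed
  show "(\<lambda>p. A $$ p) ` ({..<dim_row A} \<times> {..<dim_col A}) = {x. aa x < d \<and> (bb x, rr x) \<in> set L}"
  proof (intro Set.set_eqI iffI)
    fix x assume "x \<in> (\<lambda>p. A $$ p) ` ({..<dim_row A} \<times> {..<dim_col A})"
    then obtain i c where "i < d" "c < length L" "x = A $$ (i, c)" using dims by auto
    then show "x \<in> {x. aa x < d \<and> (bb x, rr x) \<in> set L}" using ent by (auto simp: aa_def bb_def rr_def)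
  next
    fix x assume "x \<in> {x. aa x < d \<and> (bb x, rr x) \<in> set L}"
    then have x1: "aa x < d" and x2: "(bb x, rr x) \<in> set L" by auto
    then obtain c where c: "c < length L" "L ! c = (bb x, rr x)" by (metis in_set_conv_nth)
    have "A $$ (aa x, c) = x" using ent[OF x1 c(1)] c(2) by (simp add: aa_def bb_def rr_def)
    then show "x \<in> (\<lambda>p. A $$ p) ` ({..<dim_row A} \<times> {..<dim_col A})"
      using x1 c(1) dims by (intro image_eqI[of _ _ "(aa x, c)"]) auto
  qed
qed

lemma source_facts:
  fixes L :: "(nat \<times> nat) list" and d :: nat
  assumes sL: "sorted_wrt keyless L"
  defines "B \<equiv> mat (length L) d (\<lambda>(r, j). (fst (L ! r), j, snd (L ! r)))"
  shows "\<forall>i<dim_row B. \<forall>j<dim_col B. \<forall>i'<dim_row B. \<forall>j'<dim_col B. B $$ (i, j) = B $$ (i', j') \<longrightarrow> i = i' \<and> j = j'"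
    and "\<forall>p\<in>{..<dim_row B} \<times> {..<dim_col B}. \<forall>q\<in>{..<dim_row B} \<times> {..<dim_col B}. posLess p q \<longleftrightarrow> ltB (B $$ p) (B $$ q)"
    and "(\<lambda>p. B $$ p) ` ({..<dim_row B} \<times> {..<dim_col B}) = {x. bb x < d \<and> (aa x, rr x) \<in> set L}"
proof -
  have ent: "B $$ (r, j) = (fst (L ! r), j, snd (L ! r))" if "r < length L" "j < d" for r j
    unfolding B_def using that by simp
  have dims: "dim_row B = length L" "dim_col B = d" unfolding B_def by auto
  show "\<forall>i<dim_row B. \<forall>j<dim_col B. \<forall>i'<dim_row B. \<forall>j'<dim_col B. B $$ (i, j) = B $$ (i', j') \<longrightarrow> i = i' \<and> j = j'"
  proof (intro allI impI)
    fix i j i' j' assume a: "i < dim_row B" "j < dim_col B" "i' < dim_row B" "j' < dim_col B" "B $$ (i, j) = B $$ (i', j')"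
    then have "j = j'" "L ! i = L ! i'" using ent dims by (auto simp: prod_eq_iff)
    then show "i = i' \<and> j = j'" using sorted_inj[OF sL] a dims by auto
  qed
  show "\<forall>p\<in>{..<dim_row B} \<times> {..<dim_col B}. \<forall>q\<in>{..<dim_row B} \<times> {..<dim_col B}. posLess p q \<longleftrightarrow> ltB (B $$ p) (B $$ q)"
  proof (intro ballI)
    fix p q assume p: "p \<in> {..<dim_row B} \<times> {..<dim_col B}" and q: "q \<in> {..<dim_row B} \<times> {..<dim_col B}"
    obtain i c where pe: "p = (i, c)" by (cases p)
    obtain i' c' where qe: "q = (i', c')" by (cases q)
    have b: "i < length L" "c < d" "i' < length L" "c' < d" using p q pe qe dims by auto
    show "posLess p q \<longleftrightarrow> ltB (B $$ p) (B $$ q)"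
      unfolding pe qe posLess_def ltB_def using ent[OF b(1,2)] ent[OF b(3,4)] sorted_order[OF sL b(1,3)]
      by (simp add: aa_def bb_def rr_def keyless_def)
  qed
  show "(\<lambda>p. B $$ p) ` ({..<dim_row B} \<times> {..<dim_col B}) = {x. bb x < d \<and> (aa x, rr x) \<in> set L}"
  proof (intro Set.set_eqI iffI)
    fix x assume "x \<in> (\<lambda>p. B $$ p) ` ({..<dim_row B} \<times> {..<dim_col B})"
    then obtain r j where "r < length L" "j < d" "x = B $$ (r, j)" using dims by auto
    then show "x \<in> {x. bb x < d \<and> (aa x, rr x) \<in> set L}" using ent by (auto simp: aa_def bb_def rr_def)
  next
    fix x assume "x \<in> {x. bb x < d \<and> (aa x, rr x) \<in> set L}"
    then have x1: "bb x < d" and x2: "(aa x, rr x) \<in> set L" by auto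
    then obtain r where r: "r < length L" "L ! r = (aa x, rr x)" by (metis in_set_conv_nth)
    have "B $$ (r, bb x) = x" using ent[OF r(1) x1] r(2) by (simp add: aa_def bb_def rr_def)
    then show "x \<in> (\<lambda>p. B $$ p) ` ({..<dim_row B} \<times> {..<dim_col B})"
      using x1 r(1) dims by (intro image_eqI[of _ _ "(r, bb x)"]) auto
  qed
qed

lemma sink_mat_blk:
  "sink_mat nr s t m \<gamma> = mat (m \<gamma>) (length (blk nr (\<lambda>k. t k = \<gamma>) (\<lambda>k. m (s k))))
     (\<lambda>(i, c). (i, fst (blk nr (\<lambda>k. t k = \<gamma>) (\<lambda>k. m (s k)) ! c), snd (blk nr (\<lambda>k. t k = \<gamma>) (\<lambda>k. m (s k)) ! c)))"
  unfolding sink_mat_def blk_def Let_def by simp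

lemma source_mat_blk:
  "source_mat nr s t m \<gamma> = mat (length (blk nr (\<lambda>k. s k = \<gamma>) (\<lambda>k. m (t k)))) (m \<gamma>)
     (\<lambda>(r, j). (fst (blk nr (\<lambda>k. s k = \<gamma>) (\<lambda>k. m (t k)) ! r), j, snd (blk nr (\<lambda>k. s k = \<gamma>) (\<lambda>k. m (t k)) ! r)))"
  unfolding source_mat_def blk_def Let_def by simp

lemma mon_dvd_indm:
  assumes "finite V" "finite W1" "finite W2" "V \<subseteq> W1 \<union> W2"
  shows "mon_dvd (indm V) (mon_lcm (indm W1) (indm W2))"
proof -
  have fin: "finite {x. max (Poly_Mapping.lookup (indm W1) x) (Poly_Mapping.lookup (indm W2) x) \<noteq> 0}"
    by (rule finite_subset[of _ "W1 \<union> W2"]) (use assms in \<open>auto simp: lookup_indm\<close>)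
  show ?thesis
    unfolding mon_dvd_def mon_lcm_def
    using assms by (auto simp: lookup_Abs_poly_mapping[OF fin] lookup_indm)
qed

lemma symdiff_card:
  assumes "finite A" "finite B"
  shows "card ((A - B) \<union> (B - A)) = (card A - card (A \<inter> B)) + (card B - card (A \<inter> B))"
proof -
  have "card ((A - B) \<union> (B - A)) = card (A - B) + card (B - A)"
    by (rule card_Un_disjoint) (use assms in auto)
  moreover have "card (A - B) = card A - card (A \<inter> B)" using assms by (simp add: card_Diff_subset_Int)
  moreover have "card (B - A) = card B - card (A \<inter> B)"
    using assms by (simp add: card_Diff_subset_Int Int_commute)
  ultimately show ?thesis by simp
qed

lemma minors_finite_V:
  "V \<subseteq> (\<lambda>p. A $$ p) ` ({..<dim_row A} \<times> {..<dim_col A}) \<Longrightarrow> finite V"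
  by (rule finite_subset) auto

theorem proposition2p24:
  fixes nr :: nat and s t :: "nat \<Rightarrow> 'v" and m :: "'v \<Rightarrow> nat"
    and ord :: "(var \<times> var) set" and k0 u v :: nat
    and M N :: "'a::field mpoly"
  assumes "bipartite_quiver nr s t"
    and "strict_linear_order_on (qvars nr s t m) ord"
    and "\<forall>\<gamma>. consistent ord (sink_mat nr s t m \<gamma>) \<and> consistent ord (source_mat nr s t m \<gamma>)"
    and "k0 < nr"
    and "0 < u" and "0 < v"
    and "M \<in> minors u (sink_mat nr s t m (t k0))"
    and "N \<in> minors v (source_mat nr s t m (s k0))"
    and "adjacent ord u (sink_mat nr s t m (t k0)) v (source_mat nr s t m (s k0)) M N"
  shows "\<not> (\<exists>p1 p2 p3. violation ord M N p1 p2 p3)"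
proof
  assume "\<exists>p1 p2 p3. violation ord M N p1 p2 p3"
  then obtain p1 p2 p3 where viol: "violation ord M N p1 p2 p3" by blast
  note slo = assms(2)
  define LA where "LA = blk nr (\<lambda>k. t k = t k0) (\<lambda>k. m (s k))"
  define LB where "LB = blk nr (\<lambda>k. s k = s k0) (\<lambda>k. m (t k))"
  define A where "A = sink_mat nr s t m (t k0)"
  define B where "B = source_mat nr s t m (s k0)"
  have Aeq: "A = mat (m (t k0)) (length LA) (\<lambda>(i, c). (i, fst (LA ! c), snd (LA ! c)))"
    unfolding A_def LA_def by (rule sink_mat_blk)
  have Beq: "B = mat (length LB) (m (s k0)) (\<lambda>(r, j). (fst (LB ! r), j, snd (LB ! r)))"
    unfolding B_def LB_def by (rule source_mat_blk)
  have sLA: "sorted_wrt keyless LA" unfolding LA_def by (rule blk_sorted)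
  have sLB: "sorted_wrt keyless LB" unfolding LB_def by (rule blk_sorted)
  have sfA1: "\<forall>i<dim_row A. \<forall>j<dim_col A. \<forall>i'<dim_row A. \<forall>j'<dim_col A. A $$ (i, j) = A $$ (i', j') \<longrightarrow> i = i' \<and> j = j'"
    unfolding Aeq by (rule sink_facts(1)[OF sLA])
  have sfA2: "\<forall>p\<in>{..<dim_row A} \<times> {..<dim_col A}. \<forall>q\<in>{..<dim_row A} \<times> {..<dim_col A}. posLess p q \<longleftrightarrow> ltA (A $$ p) (A $$ q)"
    unfolding Aeq by (rule sink_facts(2)[OF sLA])
  have sfA3: "(\<lambda>p. A $$ p) ` ({..<dim_row A} \<times> {..<dim_col A}) = {x. aa x < m (t k0) \<and> (bb x, rr x) \<in> set LA}"
    unfolding Aeq by (rule sink_facts(3)[OF sLA])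
  have sfB1: "\<forall>i<dim_row B. \<forall>j<dim_col B. \<forall>i'<dim_row B. \<forall>j'<dim_col B. B $$ (i, j) = B $$ (i', j') \<longrightarrow> i = i' \<and> j = j'"
    unfolding Beq by (rule source_facts(1)[OF sLB])
  have sfB2: "\<forall>p\<in>{..<dim_row B} \<times> {..<dim_col B}. \<forall>q\<in>{..<dim_row B} \<times> {..<dim_col B}. posLess p q \<longleftrightarrow> ltB (B $$ p) (B $$ q)"
    unfolding Beq by (rule source_facts(2)[OF sLB])
  have sfB3: "(\<lambda>p. B $$ p) ` ({..<dim_row B} \<times> {..<dim_col B}) = {x. bb x < m (s k0) \<and> (aa x, rr x) \<in> set LB}"
    unfolding Beq by (rule source_facts(3)[OF sLB])
  define EA where "EA = {x. aa x < m (t k0) \<and> (bb x, rr x) \<in> set LA}"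
  define EB where "EB = {x. bb x < m (s k0) \<and> (aa x, rr x) \<in> set LB}"
  have EAc: "x \<in> EA \<longleftrightarrow> aa x < m (t k0) \<and> rr x < nr \<and> t (rr x) = t k0 \<and> bb x < m (s (rr x))" for x
    unfolding EA_def LA_def blk_set by auto
  have EBc: "x \<in> EB \<longleftrightarrow> bb x < m (s k0) \<and> rr x < nr \<and> s (rr x) = s k0 \<and> aa x < m (t (rr x))" for x
    unfolding EB_def LB_def blk_set by auto
  have qv: "x \<in> qvars nr s t m \<longleftrightarrow> rr x < nr \<and> aa x < m (t (rr x)) \<and> bb x < m (s (rr x))" for x
    unfolding qvars_def aa_def bb_def rr_def by (cases x) auto
  have imA: "(\<lambda>p. A $$ p) ` ({..<dim_row A} \<times> {..<dim_col A}) = EA" using sfA3 unfolding EA_def .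
  have imB: "(\<lambda>p. B $$ p) ` ({..<dim_row B} \<times> {..<dim_col B}) = EB" using sfB3 unfolding EB_def .
  have entA: "\<forall>i<dim_row A. \<forall>j<dim_col A. A $$ (i, j) \<in> qvars nr s t m"
  proof (intro allI impI)
    fix i j assume "i < dim_row A" "j < dim_col A"
    then have "A $$ (i, j) \<in> EA" using imA by blast
    then show "A $$ (i, j) \<in> qvars nr s t m" unfolding EAc qv by auto
  qed
  have entB: "\<forall>i<dim_row B. \<forall>j<dim_col B. B $$ (i, j) \<in> qvars nr s t m"
  proof (intro allI impI)
    fix i j assume "i < dim_row B" "j < dim_col B"
    then have "B $$ (i, j) \<in> EB" using imB by blast
    then show "B $$ (i, j) \<in> qvars nr s t m" unfolding EBc qv by auto
  qed
  have consA: "consistent ord A" using assms(3) unfolding A_def by blast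
  have consB: "consistent ord B" using assms(3) unfolding B_def by blast
  note trA = transfer_minors[OF slo entA sfA1 consA sfA2, unfolded imA]
  note trB = transfer_minors[OF slo entB sfB1 consB sfB2, unfolded imB]
  obtain VM where VM: "VM \<subseteq> EA" "chainR ltA VM" "card VM = u" "LM ord M = indm VM"
    using trA(1)[of M u] assms(7) unfolding A_def by blast
  obtain VN where VN: "VN \<subseteq> EB" "chainR ltB VN" "card VN = v" "LM ord N = indm VN"
    using trB(1)[of N v] assms(8) unfolding B_def by blast
  have finEA: "finite EA" using imA[symmetric] by simp
  have finEB: "finite EB" using imB[symmetric] by simp
  have fM: "finite VM" using VM(1) finEA finite_subset by blast
  have fN: "finite VN" using VN(1) finEB finite_subset by blast
  have VsM: "Vset ord M = VM" unfolding Vset_def VM(4) using keys_indm[OF fM] .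
  have VsN: "Vset ord N = VN" unfolding Vset_def VN(4) using keys_indm[OF fN] .
  obtain a1 b1 r1 where e1: "p1 = (a1, b1, r1)" by (cases p1)
  obtain a2 b2 r2 where e2: "p2 = (a2, b2, r2)" by (cases p2)
  obtain a3 b3 r3 where e3: "p3 = (a3, b3, r3)" by (cases p3)
  have vi: "p1 \<in> VM" "p2 \<in> VN" "p3 \<in> VM" "p3 \<in> VN" "p1 \<noteq> p2"
    "rr p1 = rr p3" "rr p2 = rr p3" "aa p1 \<le> aa p2" "aa p2 < aa p3" "bb p2 \<le> bb p1" "bb p1 < bb p3"
    using viol unfolding violation_def VsM VsN e1 e2 e3 by (auto simp: aa_def bb_def rr_def)
  have dMN: "dist_LM ord M N = card ((VM - VN) \<union> (VN - VM))" unfolding dist_LM_def VsM VsN ..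
  have adj: "\<not> (\<exists>P \<in> minors_L ord (mon_lcm (indm VM) (indm VN)) u A. dist_LM ord P N < dist_LM ord M N)"
            "\<not> (\<exists>Q \<in> minors_L ord (mon_lcm (indm VM) (indm VN)) v B. dist_LM ord M Q < dist_LM ord M N)"
    using assms(9) unfolding adjacent_def Let_def A_def[symmetric] B_def[symmetric] VM(4) VN(4) by auto
  have symd: "card ((X - VN) \<union> (VN - X)) < card ((VM - VN) \<union> (VN - VM))"
    if "finite X" "card X = card VM" "card (VM \<inter> VN) < card (X \<inter> VN)" for X
  proof -
    have "card (X \<inter> VN) \<le> card X" "card (X \<inter> VN) \<le> card VN"
      using that(1) fN by (auto intro: card_mono)
    moreover have "card (VM \<inter> VN) \<le> card VM" "card (VM \<inter> VN) \<le> card VN"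
      using fM fN by (auto intro: card_mono)
    ultimately show ?thesis using symdiff_card[OF that(1) fN] symdiff_card[OF fM fN] that(2,3) by simp
  qed
  have symd2: "card ((VM - X) \<union> (X - VM)) < card ((VM - VN) \<union> (VN - VM))"
    if "finite X" "card X = card VN" "card (VM \<inter> VN) < card (X \<inter> VM)" for X
  proof -
    have "card (X \<inter> VM) \<le> card X" "card (X \<inter> VM) \<le> card VM"
      using that(1) fM by (auto intro: card_mono)
    moreover have "card (VM \<inter> VN) \<le> card VM" "card (VM \<inter> VN) \<le> card VN"
      using fM fN by (auto intro: card_mono)
    moreover have "VM \<inter> X = X \<inter> VM" by blast
    ultimately show ?thesis using symdiff_card[OF fM that(1)] symdiff_card[OF fM fN] that(2,3) by simp
  qed
  from comb[OF fM fN VM(2) VN(2) vi(1) vi(2) vi(3) vi(4) vi(6) vi(7) vi(8) vi(9) vi(10) vi(11) vi(5)]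
  show False
  proof
    assume "\<exists>V'. V' \<subseteq> VM \<union> VN \<and> chainR ltA V' \<and> card V' = card VM \<and>
            card (VM \<inter> VN) < card (V' \<inter> VN) \<and> (\<forall>z\<in>V' - VM. rr z = rr p3)"
    then obtain V' where V': "V' \<subseteq> VM \<union> VN" "chainR ltA V'" "card V' = card VM"
      "card (VM \<inter> VN) < card (V' \<inter> VN)" "\<forall>z\<in>V' - VM. rr z = rr p3" by blast
    have p1E: "p1 \<in> EA" using vi(1) VM(1) by blast
    have V'E: "V' \<subseteq> EA"
    proof
      fix z assume z: "z \<in> V'"
      show "z \<in> EA"
      proof (cases "z \<in> VM")
        case True then show ?thesis using VM(1) by blast
      next
        case False
        then have "z \<in> VN" "rr z = rr p1" using z V'(1,5) vi(6) by auto
        then have "z \<in> EB" using VN(1) by blast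
        then show ?thesis using p1E \<open>rr z = rr p1\<close> unfolding EAc EBc by auto
      qed
    qed
    have fV': "finite V'" using V'E finEA finite_subset by blast
    obtain P :: "'a mpoly" where P: "P \<in> minors u A" "LM ord P = indm V'"
      using trA(2)[OF V'E V'(2)] V'(3) VM(3) by auto
    have "P \<in> minors_L ord (mon_lcm (indm VM) (indm VN)) u A"
      unfolding minors_L_def using P mon_dvd_indm[OF fV' fM fN V'(1)] by simp
    moreover have "dist_LM ord P N < dist_LM ord M N"
    proof -
      have "dist_LM ord P N = card ((V' - VN) \<union> (VN - V'))"
        unfolding dist_LM_def Vset_def P(2) VN(4) keys_indm[OF fV'] keys_indm[OF fN] ..
      then show ?thesis unfolding dMN using symd[OF fV' V'(3) V'(4)] by simp
    qed
    ultimately show False using adj(1) by blast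
  next
    assume "\<exists>V'. V' \<subseteq> VM \<union> VN \<and> chainR ltB V' \<and> card V' = card VN \<and>
            card (VM \<inter> VN) < card (V' \<inter> VM) \<and> (\<forall>z\<in>V' - VN. rr z = rr p3)"
    then obtain V' where V': "V' \<subseteq> VM \<union> VN" "chainR ltB V'" "card V' = card VN"
      "card (VM \<inter> VN) < card (V' \<inter> VM)" "\<forall>z\<in>V' - VN. rr z = rr p3" by blast
    have p2E: "p2 \<in> EB" using vi(2) VN(1) by blast
    have V'E: "V' \<subseteq> EB"
    proof
      fix z assume z: "z \<in> V'"
      show "z \<in> EB"
      proof (cases "z \<in> VN")
        case True then show ?thesis using VN(1) by blast
      next
        case False
        then have "z \<in> VM" "rr z = rr p2" using z V'(1,5) vi(7) by auto
        then have "z \<in> EA" using VM(1) by blast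
        then show ?thesis using p2E \<open>rr z = rr p2\<close> unfolding EAc EBc by auto
      qed
    qed
    have fV': "finite V'" using V'E finEB finite_subset by blast
    obtain Q :: "'a mpoly" where Q: "Q \<in> minors v B" "LM ord Q = indm V'"
      using trB(2)[OF V'E V'(2)] V'(3) VN(3) by auto
    have "Q \<in> minors_L ord (mon_lcm (indm VM) (indm VN)) v B"
      unfolding minors_L_def using Q mon_dvd_indm[OF fV' fM fN V'(1)] by simp
    moreover have "dist_LM ord M Q < dist_LM ord M N"
    proof -
      have "dist_LM ord M Q = card ((VM - V') \<union> (V' - VM))"
        unfolding dist_LM_def Vset_def Q(2) VM(4) keys_indm[OF fV'] keys_indm[OF fM] ..
      then show ?thesis unfolding dMN using symd2[OF fV' V'(3) V'(4)] by simp
    qed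
    ultimately show False using adj(2) by blast
  qed
qed

end
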